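(* Let $\mathrm{cleaf}_3:\mathbb{R}\to\mathbb{R}$ be the leaf function of basis $3$ and write $c=\mathrm{cleaf}_3(l)$. For every real $l$, $$\mathrm{cleaf}_3(2l)=\frac{2c^2+2c^4-1}{\sqrt{1+8c^2+8c^6-8c^8}}.$$
   Context: For a natural number $n$, the leaf function $\mathrm{cleaf}_n:\mathbb{R}\to\mathbb{R}$ is the solution of $\frac{\mathrm{d}^2r}{\mathrm{d}l^2}=-n\,r^{2n-1}$ with $r(0)=1$, $r'(0)=0$. *)

theory Defs
  imports Complex_Main
begin

definition leaf_ivp :: "nat \<Rightarrow> (real \<Rightarrow> real) \<Rightarrow> bool" where
  "leaf_ivp n r \<longleftrightarrow>
     (\<exists>r'. (\<forall>l. (r has_real_derivative r' l) (at l)) \<and>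
           (\<forall>l. (r' has_real_derivative (- real n * r l ^ (2 * n - 1))) (at l)) \<and>
           r 0 = 1 \<and> r' 0 = 0)"

definition cleaf :: "nat \<Rightarrow> real \<Rightarrow> real" where
  "cleaf n = (THE r. leaf_ivp n r)"

end

theory Submission
  imports Defs "HOL-Analysis.Analysis"
begin

definition "Nn (c::real) = 2*c^2+2*c^4-1"
definition "Pp (c::real) = 1+8*c^2+8*c^6-8*c^8"
definition "Aa (c::real) = 24*c + 48*c^3 + 144*c^5 - 96*c^7 + 96*c^9"
definition "Aad (c::real) = 24 + 144*c^2 + 720*c^4 - 672*c^6 + 864*c^8"
definition "Ppd (c::real) = 16*c + 48*c^5 - 64*c^7"
definition "Bb c = 2*Aad c*Pp c - 3*Aa c*Ppd c"
definition "Dd c = Nn c / sqrt (Pp c)"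
definition "D1 c = Aa c / (2 * Pp c * sqrt (Pp c))"
definition "D2 c = Bb c / (4 * (Pp c)^2 * sqrt (Pp c))"

lemma Pp_deriv: "(Pp has_real_derivative Ppd c) (at c within S)"
  unfolding Pp_def[abs_def] Ppd_def by (auto intro!: derivative_eq_intros)
lemma Aa_deriv: "(Aa has_real_derivative Aad c) (at c within S)"
  unfolding Aa_def[abs_def] Aad_def by (auto intro!: derivative_eq_intros)
lemma Nn_deriv: "(Nn has_real_derivative (4*c+8*c^3)) (at c within S)"
  unfolding Nn_def[abs_def] by (auto intro!: derivative_eq_intros)

lemma Aa_eq: "Aa c = 2*(4*c+8*c^3)*Pp c - Nn c * Ppd c"
  unfolding Aa_def Pp_def Nn_def Ppd_def by algebra

lemma Dd_deriv: assumes "Pp c > 0" shows "(Dd has_real_derivative D1 c) (at c)"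
  unfolding Dd_def[abs_def]
  apply (rule DERIV_cong)
  using assms apply (auto intro!: derivative_eq_intros Nn_deriv Pp_deriv)[1]
proof -
  define q where "q = sqrt (Pp c)"
  have sp: "q > 0" using assms q_def by simp
  have Ps: "Pp c = q^2" using assms q_def by simp
  show "((4 * c + 8 * c ^ 3) * sqrt (Pp c) - Nn c * (inverse (sqrt (Pp c)) / 2 * Ppd c)) /
     (sqrt (Pp c) * sqrt (Pp c)) = D1 c"
    unfolding D1_def Aa_eq q_def[symmetric] using sp unfolding Ps
    by (simp add: field_simps power2_eq_square)
qed

lemma D1_deriv: assumes "Pp c > 0" shows "(D1 has_real_derivative D2 c) (at c)"
  unfolding D1_def[abs_def]
  apply (rule DERIV_cong)
  using assms apply (auto intro!: derivative_eq_intros Aa_deriv Pp_deriv)[1]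
proof -
  define q where "q = sqrt (Pp c)"
  have sp: "q > 0" using assms q_def by simp
  have Ps: "Pp c = q^2" using assms q_def by simp
  show "(Aad c * (2 * Pp c * sqrt (Pp c)) - Aa c * ((0 * Pp c + Ppd c * 2) * sqrt (Pp c) +
       inverse (sqrt (Pp c)) / 2 * Ppd c * (2 * Pp c))) /
     (2 * Pp c * sqrt (Pp c) * (2 * Pp c * sqrt (Pp c))) = D2 c"
    unfolding D2_def Bb_def q_def[symmetric] using sp unfolding Ps
    by (simp add: field_simps power2_eq_square)
qed

lemma energy_id: "Aa c^2*(1-c^6)/16 + Nn c^6 = Pp c^3"
  unfolding Aa_def Pp_def Nn_def by algebra
lemma ode_id: "Bb c * (1-c^6) - 6*c^5*Aa c*Pp c + 48 * Nn c^5 = 0"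
  unfolding Bb_def Aad_def Aa_def Pp_def Nn_def Ppd_def by algebra

lemma Pp_ge: assumes "\<bar>c\<bar> \<le> 1" shows "Pp c \<ge> 1"
proof -
  have c2: "c^2 \<le> 1" using assms by (metis abs_square_le_1)
  have "Pp c = 1 + 8*c^2 + 8*c^6*(1-c^2)" unfolding Pp_def by algebra
  moreover have "c^6*(1-c^2) \<ge> 0" using c2 by (simp add: zero_le_even_power)
  moreover have "c^2 \<ge> 0" by simp
  ultimately show ?thesis by linarith
qed

lemma energy_D: assumes "Pp c > 0" shows "D1 c^2 * (1 - c^6)/4 + Dd c^6 = 1"
proof -
  define q where "q = sqrt (Pp c)"
  have sp: "q > 0" using assms q_def by simp
  have Ps: "Pp c = q^2" using assms q_def by simp
  have e: "Aa c^2*(1-c^6)/16 + Nn c^6 = (q^2)^3" using energy_id[of c] Ps by simp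
  show ?thesis unfolding D1_def Dd_def q_def[symmetric] unfolding Ps using sp e
    by (simp add: field_simps power2_eq_square) algebra
qed

lemma ode_D: assumes "Pp c > 0" shows "D2 c*(1-c^6) - 3*c^5*D1 c = -12 * Dd c^5"
proof -
  define q where "q = sqrt (Pp c)"
  have sp: "q > 0" using assms q_def by simp
  have Ps: "Pp c = q^2" using assms q_def by simp
  have e: "Bb c * (1-c^6) - 6 * c^5 * Aa c * q^2 + 48 * Nn c^5 = 0" using ode_id[of c] Ps by simp
  show ?thesis unfolding D1_def Dd_def D2_def q_def[symmetric] unfolding Ps using sp e
    by (simp add: field_simps power2_eq_square) algebra
qed

lemma six_le1: assumes "(x::real)^6 \<le> 1" shows "\<bar>x\<bar> \<le> 1"
proof (rule ccontr)
  assume "\<not> \<bar>x\<bar> \<le> 1"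
  then have "1 < \<bar>x\<bar>" by simp
  then have "1 < \<bar>x\<bar>^6" by (rule one_less_power) simp
  also have "\<bar>x\<bar>^6 = x^6" by (simp add: power_even_abs_numeral)
  finally show False using assms by simp
qed

lemma dbl_pt:
  fixes f g :: "real \<Rightarrow> real"
  assumes f: "(f has_real_derivative g x0) (at x0)"
    and g: "(g has_real_derivative (-3 * f x0 ^ 5)) (at x0)"
    and e: "g x0 ^ 2 + f x0 ^ 6 = 1"
  shows "((\<lambda>t. Dd (f (t/2))) has_real_derivative (D1 (f x0) * g x0 / 2)) (at (2*x0))"
    and "((\<lambda>t. D1 (f (t/2)) * g (t/2) / 2) has_real_derivative (-3 * Dd (f x0) ^ 5)) (at (2*x0))"
    and "(D1 (f x0) * g x0 / 2)^2 + Dd (f x0) ^ 6 = 1"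
proof -
  have "f x0 ^ 6 \<le> 1" using e by (smt (verit) zero_le_power2)
  then have "\<bar>f x0\<bar> \<le> 1" by (rule six_le1)
  then have P: "Pp (f x0) > 0" using Pp_ge by (smt (verit))
  have h: "((\<lambda>t::real. t/2) has_real_derivative 1/2) (at (2*x0))"
    by (auto intro!: derivative_eq_intros)
  have f2: "((\<lambda>t. f (t/2)) has_real_derivative g x0 * (1/2)) (at (2*x0))"
    using DERIV_chain2[where f=f and Da="g x0" and x="2*x0" and g="\<lambda>t. t/2" and Db="1/2"] f h by simp
  have g2: "((\<lambda>t. g (t/2)) has_real_derivative (-3 * f x0 ^ 5) * (1/2)) (at (2*x0))"
    using DERIV_chain2[where f=g and Da="-3 * f x0 ^ 5" and x="2*x0" and g="\<lambda>t. t/2" and Db="1/2"] g h by simp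
  have "(Dd has_real_derivative D1 (f x0)) (at ((\<lambda>t. f (t/2)) (2*x0)))" using Dd_deriv[OF P] by simp
  from DERIV_chain2[OF this f2]
  have "((\<lambda>t. Dd (f (t/2))) has_real_derivative D1 (f x0) * (g x0 * (1/2))) (at (2*x0))" by simp
  then show "((\<lambda>t. Dd (f (t/2))) has_real_derivative (D1 (f x0) * g x0 / 2)) (at (2*x0))" by simp
  have "(D1 has_real_derivative D2 (f x0)) (at ((\<lambda>t. f (t/2)) (2*x0)))" using D1_deriv[OF P] by simp
  from DERIV_chain2[OF this f2]
  have d1: "((\<lambda>t. D1 (f (t/2))) has_real_derivative D2 (f x0) * (g x0 * (1/2))) (at (2*x0))" by simp
  have "((\<lambda>t. D1 (f (t/2)) * g (t/2) / 2) has_real_derivative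
      (D2 (f x0) * (g x0 * (1/2)) * g x0 + D1 (f x0) * ((-3 * f x0 ^ 5) * (1/2))) / 2) (at (2*x0))"
    using DERIV_cdivide[OF DERIV_mult[OF d1 g2], of 2] by (simp add: ac_simps)
  moreover have "(D2 (f x0) * (g x0 * (1/2)) * g x0 + D1 (f x0) * ((-3 * f x0 ^ 5) * (1/2))) / 2 = -3 * Dd (f x0) ^ 5"
  proof -
    have gg: "g x0 * g x0 = 1 - f x0 ^ 6" using e by (simp add: power2_eq_square)
    have "(D2 (f x0) * (g x0 * (1/2)) * g x0 + D1 (f x0) * ((-3 * f x0 ^ 5) * (1/2))) / 2
        = (D2 (f x0) * (g x0 * g x0) - 3 * f x0 ^ 5 * D1 (f x0)) / 4"
      by (simp add: field_simps)
    also have "\<dots> = -3 * Dd (f x0) ^ 5" unfolding gg using ode_D[OF P] by simp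
    finally show ?thesis .
  qed
  ultimately show "((\<lambda>t. D1 (f (t/2)) * g (t/2) / 2) has_real_derivative (-3 * Dd (f x0) ^ 5)) (at (2*x0))"
    by simp
  have "g x0 ^ 2 = 1 - f x0 ^ 6" using e by simp
  then show "(D1 (f x0) * g x0 / 2)^2 + Dd (f x0) ^ 6 = 1"
    using energy_D[OF P] e by (simp add: power_mult_distrib field_simps) algebra
qed

lemma pow5_lip: assumes "abs (x::real) \<le> 1" "abs y \<le> 1" shows "abs (x^5 - y^5) \<le> 5 * abs (x-y)"
proof -
  have eq: "x^5 - y^5 = (x-y)*(x^4 + x^3*y + x^2*y^2 + x*y^3 + y^4)" by algebra
  have b: "abs (x^4 + x^3*y + x^2*y^2 + x*y^3 + y^4) \<le> 5"
  proof -
    have "abs (x^4 + x^3*y + x^2*y^2 + x*y^3 + y^4) \<le> (abs x)^4 + (abs x)^3*(abs y) + (abs x)^2*(abs y)^2 + (abs x)*(abs y)^3 + (abs y)^4"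
      by (simp add: abs_mult power_abs abs_triangle_ineq order_trans[OF abs_triangle_ineq add_mono])
    also have "\<dots> \<le> 5"
    proof -
      have a1: "(abs x)^n \<le> 1" "(abs y)^n \<le> 1" for n::nat using assms by (simp_all add: power_le_one)
      have "(abs x)^3*(abs y) \<le> 1" by (rule mult_le_one[OF a1(1)]) (use assms in auto)
      moreover have "(abs x)^2*(abs y)^2 \<le> 1" by (rule mult_le_one[OF a1(1)]) (use a1(2)[of 2] in auto)
      moreover have "(abs x)*(abs y)^3 \<le> 1" by (rule mult_le_one[OF assms(1)]) (use a1(2) in auto)
      ultimately show ?thesis using a1[of 4] by linarith
    qed
    finally show ?thesis .
  qed
  have "abs (x^5 - y^5) = abs (x-y) * abs (x^4 + x^3*y + x^2*y^2 + x*y^3 + y^4)" unfolding eq by (simp add: abs_mult)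
  also have "\<dots> \<le> abs (x-y) * 5" using b by (simp add: mult_left_mono)
  finally show ?thesis by simp
qed


definition "solb b f g \<longleftrightarrow> (\<forall>t. \<bar>t\<bar> < b \<longrightarrow> (f has_real_derivative g t) (at t) \<and>
   (g has_real_derivative (-3 * f t ^ 5)) (at t) \<and> g t ^ 2 + f t ^ 6 = 1)"

lemma solb_bound: assumes "solb b f g" "\<bar>t\<bar> < b" shows "\<bar>f t\<bar> \<le> 1" "\<bar>g t\<bar> \<le> 1"
proof -
  have e: "g t ^ 2 + f t ^ 6 = 1" using assms unfolding solb_def by blast
  have "f t ^ 6 \<le> 1" using e by (smt (verit) zero_le_power2)
  then show "\<bar>f t\<bar> \<le> 1" by (rule six_le1)
  have "f t ^ 6 \<ge> 0" by (simp add: zero_le_even_power)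
  then have "g t ^ 2 \<le> 1" using e by linarith
  then show "\<bar>g t\<bar> \<le> 1" by (metis abs_square_le_1)
qed

lemma uniq:
  assumes s1: "solb b f1 g1" and s2: "solb b f2 g2"
    and i: "f1 0 = f2 0" "g1 0 = g2 0" and t: "\<bar>t\<bar> < b"
  shows "f1 t = f2 t \<and> g1 t = g2 t"
proof -
  define w where "w x = (f1 x - f2 x)^2 + (g1 x - g2 x)^2" for x
  define w' where "w' x = 2*(f1 x - f2 x)*(g1 x - g2 x) + 2*(g1 x - g2 x)*(-3 * f1 x ^ 5 + 3 * f2 x ^ 5)" for x
  have wd: "(w has_real_derivative w' x) (at x)" if "\<bar>x\<bar> < b" for x
  proof -
    have d: "(f1 has_real_derivative g1 x) (at x)" "(g1 has_real_derivative (-3 * f1 x ^ 5)) (at x)"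
      "(f2 has_real_derivative g2 x) (at x)" "(g2 has_real_derivative (-3 * f2 x ^ 5)) (at x)"
      using s1 s2 that unfolding solb_def by blast+
    show ?thesis unfolding w_def[abs_def] w'_def
      apply (rule DERIV_cong)
      using d apply (auto intro!: derivative_eq_intros)[1]
      by (simp add: algebra_simps)
  qed
  have wb: "\<bar>w' x\<bar> \<le> 16 * w x" if "\<bar>x\<bar> < b" for x
  proof -
    define a where "a = f1 x - f2 x"
    define c where "c = g1 x - g2 x"
    have l: "\<bar>f1 x ^ 5 - f2 x ^ 5\<bar> \<le> 5 * \<bar>a\<bar>"
      unfolding a_def by (rule pow5_lip; rule solb_bound[OF _ that]; fact)
    have "w' x = 2*a*c - 6*c*(f1 x ^ 5 - f2 x ^ 5)" unfolding w'_def a_def c_def by algebra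
    then have "\<bar>w' x\<bar> \<le> \<bar>2*a*c\<bar> + \<bar>6*c*(f1 x ^ 5 - f2 x ^ 5)\<bar>"
      by (simp only: abs_triangle_ineq4)
    also have "\<dots> = 2*\<bar>a\<bar>*\<bar>c\<bar> + 6*\<bar>c\<bar>*\<bar>f1 x ^ 5 - f2 x ^ 5\<bar>"
      by (simp add: abs_mult)
    also have "\<dots> \<le> 2*\<bar>a\<bar>*\<bar>c\<bar> + 6*\<bar>c\<bar>*(5*\<bar>a\<bar>)"
      using mult_left_mono[OF l, of "abs c"] by (simp add: algebra_simps)
    also have "\<dots> = 16 * (2*\<bar>a\<bar>*\<bar>c\<bar>)" by simp
    also have "\<dots> \<le> 16 * (a^2 + c^2)"
    proof -
      have "0 \<le> (\<bar>a\<bar> - \<bar>c\<bar>)^2" by simp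
      then have "2*\<bar>a\<bar>*\<bar>c\<bar> \<le> a^2 + c^2" by (simp add: power2_eq_square algebra_simps)
      then show ?thesis by simp
    qed
    finally show ?thesis unfolding w_def a_def c_def .
  qed
  have w0: "w 0 = 0" unfolding w_def using i by simp
  have wnn: "w x \<ge> 0" for x unfolding w_def by simp
  have "w t \<le> 0"
  proof (cases "t \<ge> 0")
    case True
    define u where "u x = exp (-16*x) * w x" for x
    have "u t \<le> u 0"
    proof (rule DERIV_nonpos_imp_nonincreasing[OF True])
      fix x assume x: "0 \<le> x" "x \<le> t"
      then have xb: "\<bar>x\<bar> < b" using t by simp
      have "(u has_real_derivative (exp (-16*x) * (-16) * w x + exp (-16*x) * w' x)) (at x)"
        unfolding u_def[abs_def]
        apply (rule DERIV_cong)
        using wd[OF xb] apply (auto intro!: derivative_eq_intros)[1]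
        by (simp add: algebra_simps)
      moreover have "exp (-16*x) * (-16) * w x + exp (-16*x) * w' x \<le> 0"
      proof -
        have "w' x - 16 * w x \<le> 0" using wb[OF xb] by linarith
        then have "exp (-16*x) * (w' x - 16 * w x) \<le> 0" by (simp add: mult_nonneg_nonpos)
        then show ?thesis by (simp add: algebra_simps)
      qed
      ultimately show "\<exists>y. (u has_real_derivative y) (at x) \<and> y \<le> 0" by blast
    qed
    then have "exp (-16*t) * w t \<le> 0" unfolding u_def using w0 by simp
    then show ?thesis by (simp add: mult_le_0_iff)
  next
    case False
    then have tn: "t \<le> 0" by simp
    define u where "u x = exp (16*x) * w x" for x
    have "u t \<le> u 0"
    proof (rule DERIV_nonneg_imp_nondecreasing[OF tn])
      fix x assume x: "t \<le> x" "x \<le> 0"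
      then have xb: "\<bar>x\<bar> < b" using t by simp
      have "(u has_real_derivative (exp (16*x) * 16 * w x + exp (16*x) * w' x)) (at x)"
        unfolding u_def[abs_def]
        apply (rule DERIV_cong)
        using wd[OF xb] apply (auto intro!: derivative_eq_intros)[1]
        by (simp add: algebra_simps)
      moreover have "exp (16*x) * 16 * w x + exp (16*x) * w' x \<ge> 0"
      proof -
        have "w' x + 16 * w x \<ge> 0" using wb[OF xb] by linarith
        then have "exp (16*x) * (w' x + 16 * w x) \<ge> 0" by simp
        then show ?thesis by (simp add: algebra_simps)
      qed
      ultimately show "\<exists>y. (u has_real_derivative y) (at x) \<and> y \<ge> 0" by blast
    qed
    then have "exp (16*t) * w t \<le> 0" unfolding u_def using w0 by simp
    then show ?thesis by (simp add: mult_le_0_iff)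
  qed
  then have "w t = 0" using wnn[of t] by simp
  then show ?thesis unfolding w_def
    by (simp add: sum_power2_eq_zero_iff)
qed



definition "Rp (x::real) = 6 - 15*x^2 + 20*x^4 - 15*x^6 + 6*x^8 - x^10"
definition "Rpd (x::real) = -30*x + 80*x^3 - 90*x^5 + 48*x^7 - 10*x^9"
definition "rho x = 2 / sqrt (Rp x)"
definition "Lf w = integral {-1..w} rho"

lemma Rp_deriv: "(Rp has_real_derivative Rpd c) (at c within S)"
  unfolding Rp_def[abs_def] Rpd_def by (auto intro!: derivative_eq_intros)
lemma Rp_id: "x^2 * Rp x = 1 - (1-x^2)^6" unfolding Rp_def by algebra
lemma Rp_ode: "Rp x / 2 + x * Rpd x / 4 = 3*(1-x^2)^5" unfolding Rp_def Rpd_def by algebra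
lemma cont_Rp: "continuous_on S Rp" unfolding Rp_def[abs_def] by (intro continuous_intros)

lemma Rp_pos: assumes "\<bar>x\<bar> \<le> 1" shows "Rp x > 0"
proof (cases "x = 0")
  case True then show ?thesis by (simp add: Rp_def)
next
  case False
  then have x2: "x^2 > 0" by simp
  have "x^2 \<le> 1" using assms by (metis abs_square_le_1)
  then have y: "0 \<le> 1 - x^2" "1 - x^2 < 1" using x2 by auto
  have "(1 - x^2)^6 < 1^6" by (rule power_strict_mono) (use y in auto)
  then have "x^2 * Rp x > 0" unfolding Rp_id by simp
  then show ?thesis using x2 by (simp add: zero_less_mult_iff)
qed

lemma rho_pos: "\<bar>x\<bar> \<le> 1 \<Longrightarrow> rho x > 0"
  unfolding rho_def using Rp_pos by simp

lemma cont_rho: "continuous_on {-1..1} rho"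
  unfolding rho_def[abs_def]
proof (intro continuous_intros cont_Rp ballI)
  fix x :: real assume "x \<in> {-1..1}"
  then have "\<bar>x\<bar> \<le> 1" by auto
  then show "sqrt (Rp x) \<noteq> 0" using Rp_pos by (simp add: less_imp_neq[symmetric])
qed

lemma Lf_deriv: assumes "-1 < w" "w < 1" shows "(Lf has_real_derivative rho w) (at w)"
proof -
  have "(Lf has_real_derivative rho w) (at w within {-1..1})"
    unfolding Lf_def[abs_def] by (rule integral_has_real_derivative[OF cont_rho]) (use assms in auto)
  then show ?thesis using at_within_Icc_at[OF assms] by simp
qed

lemma Lf_mono: assumes "-1 < x" "x < y" "y < 1" shows "Lf x < Lf y"
proof (rule DERIV_pos_imp_increasing[OF assms(2)])
  fix z assume "x \<le> z" "z \<le> y"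
  then have "-1 < z" "z < 1" using assms by auto
  then have "\<bar>z\<bar> \<le> 1" by simp
  then show "\<exists>d. (Lf has_real_derivative d) (at z) \<and> d > 0"
    using Lf_deriv[OF \<open>-1 < z\<close> \<open>z < 1\<close>] rho_pos by blast
qed

lemma Lf_inj: assumes "-1 < x" "x < 1" "-1 < y" "y < 1" "Lf x = Lf y" shows "x = y"
  using Lf_mono[of x y] Lf_mono[of y x] assms by (cases x y rule: linorder_cases) auto

definition "W z = (THE w. -1/2 \<le> w \<and> w \<le> 1/2 \<and> Lf w = z)"

lemma W_L: assumes "-1/2 \<le> w" "w \<le> 1/2" shows "W (Lf w) = w"
  unfolding W_def
  by (rule the_equality) (use assms Lf_inj in auto)

lemma L_W: assumes "Lf (-1/2) \<le> z" "z \<le> Lf (1/2)"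
  shows "-1/2 \<le> W z \<and> W z \<le> 1/2 \<and> Lf (W z) = z"
proof -
  have "continuous_on {-1/2..1/2} Lf"
  proof (rule continuous_at_imp_continuous_on, rule ballI)
    fix x :: real assume "x \<in> {-1/2..1/2}" then have "-1<x" "x<1" by auto
    then show "isCont Lf x" by (rule DERIV_isCont[OF Lf_deriv])
  qed
  then obtain w where w: "-1/2 \<le> w" "w \<le> 1/2" "Lf w = z"
    using IVT'[of Lf "-1/2" z "1/2"] assms by auto
  then show ?thesis using W_L by auto
qed



definition "l0 = Lf 0"
definition "A0 = min (l0 - Lf (-1/2)) (Lf (1/2) - l0)"
definition "f0 t = 1 - (W (t + l0))^2"
definition "g0 t = - W (t + l0) * sqrt (Rp (W (t + l0)))"

lemma A0_pos: "A0 > 0"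
  unfolding A0_def l0_def using Lf_mono[of "-1/2" 0] Lf_mono[of 0 "1/2"] by simp

lemma V_props: assumes "\<bar>t\<bar> < A0"
  shows "-1/2 < W (t + l0) \<and> W (t + l0) < 1/2 \<and>
    ((\<lambda>t. W (t + l0)) has_real_derivative sqrt (Rp (W (t + l0))) / 2) (at t)"
proof -
  define z where "z = t + l0"
  have z: "Lf (-1/2) < z" "z < Lf (1/2)" using assms unfolding z_def A0_def by auto
  define x where "x = W z"
  have x: "-1/2 \<le> x" "x \<le> 1/2" "Lf x = z" using L_W[of z] z unfolding x_def by auto
  have "x \<noteq> 1/2"
  proof
    assume "x = 1/2" then have "z = Lf (1/2)" using x(3) by metis
    then show False using z by simp
  qed
  moreover have "x \<noteq> -1/2"
  proof
    assume "x = -1/2" then have "z = Lf (-1/2)" using x(3) by metis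
    then show False using z by simp
  qed
  ultimately have xs: "-1/2 < x" "x < 1/2" using x by auto
  have ic: "isCont W (Lf x)"
    by (rule isCont_inverse_function2[of "-1/2" x "1/2"]) (use xs W_L in auto,
      auto intro!: DERIV_isCont Lf_deriv)
  have "(W has_real_derivative inverse (rho (W z))) (at z)"
  proof (rule DERIV_inverse_function[where f=Lf and a="Lf (-1/2)" and b="Lf (1/2)"])
    show "(Lf has_real_derivative rho (W z)) (at (W z))"
      using xs unfolding x_def by (intro Lf_deriv) auto
    have "\<bar>W z\<bar> \<le> 1" using xs unfolding x_def by auto
    then show "rho (W z) \<noteq> 0" using rho_pos[of "W z"] by auto
    show "Lf (-1/2) < z" "z < Lf (1/2)" by (fact z)+
    show "Lf (W y) = y" if "Lf (- 1 / 2) < y" "y < Lf (1 / 2)" for y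
      using L_W[of y] that by auto
    show "isCont W z" using ic x by simp
  qed
  moreover have "inverse (rho (W z)) = sqrt (Rp (W z)) / 2" unfolding rho_def by simp
  ultimately have "(W has_real_derivative sqrt (Rp (W z)) / 2) (at ((\<lambda>t. t + l0) t))"
    unfolding z_def by simp
  moreover have "((\<lambda>t. t + l0) has_real_derivative 1) (at t)" by (auto intro!: derivative_eq_intros)
  ultimately have "((\<lambda>t. W (t + l0)) has_real_derivative sqrt (Rp (W z)) / 2 * 1) (at t)"
    by (rule DERIV_chain2[where g="\<lambda>t. t + l0"])
  then have "((\<lambda>t. W (t + l0)) has_real_derivative sqrt (Rp (W z)) / 2) (at t)"
    by simp
  then show ?thesis using xs unfolding x_def z_def by auto
qed

lemma local_sol: "solb A0 f0 g0" "f0 0 = 1" "g0 0 = 0"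
proof -
  have W0: "W l0 = 0" unfolding l0_def using W_L[of 0] by simp
  then show "f0 0 = 1" "g0 0 = 0" unfolding f0_def g0_def by simp_all
  show "solb A0 f0 g0" unfolding solb_def
  proof (intro allI impI conjI)
    fix t assume t: "\<bar>t\<bar> < A0"
    define v where "v = W (t + l0)"
    have vp: "-1/2 < v" "v < 1/2" and vd: "((\<lambda>t. W (t + l0)) has_real_derivative sqrt (Rp v) / 2) (at t)"
      using V_props[OF t] unfolding v_def by auto
    have R: "Rp v > 0" using vp by (intro Rp_pos) auto
    define q where "q = sqrt (Rp v)"
    have qp: "q > 0" using R q_def by simp
    have Rq: "Rp v = q^2" using R q_def by simp
    show "(f0 has_real_derivative g0 t) (at t)"
      unfolding f0_def[abs_def]
      apply (rule DERIV_cong)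
      using vd apply (auto intro!: derivative_eq_intros)[1]
      unfolding g0_def v_def[symmetric] by simp
    have rd: "(Rp has_real_derivative Rpd v) (at ((\<lambda>t. W (t + l0)) t))" unfolding v_def by (rule Rp_deriv)
    have rvd: "((\<lambda>t. Rp (W (t + l0))) has_real_derivative Rpd v * (sqrt (Rp v) / 2)) (at t)"
      using DERIV_chain2[OF rd vd] by simp
    show "(g0 has_real_derivative - 3 * f0 t ^ 5) (at t)"
      unfolding g0_def[abs_def]
      apply (rule DERIV_cong)
      using vd rvd R unfolding v_def apply (auto intro!: derivative_eq_intros)[1]
      unfolding v_def[symmetric] f0_def q_def[symmetric] using qp Rp_ode[of v] unfolding Rq
      by (simp add: field_simps) algebra
    show "g0 t ^ 2 + f0 t ^ 6 = 1"
      unfolding g0_def f0_def v_def[symmetric] using R Rp_id[of v]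
      by (simp add: power_mult_distrib)
  qed
qed


definition "dF f = (\<lambda>t. Dd (f (t/2)))"
definition "dG f g = (\<lambda>t. D1 (f (t/2)) * g (t/2) / 2)"

lemma Dd1: "Dd 1 = 1"
proof -
  have "sqrt (9::real) = sqrt (3^2)" by simp
  also have "\<dots> = 3" by simp
  finally show ?thesis unfolding Dd_def Nn_def Pp_def by simp
qed

lemma sol_dbl: assumes "solb b f g" shows "solb (2*b) (dF f) (dG f g)"
  unfolding solb_def
proof (intro allI impI)
  fix t assume t: "\<bar>t\<bar> < 2*b"
  have "\<bar>t/2\<bar> < b" using t by simp
  then have a: "(f has_real_derivative g (t/2)) (at (t/2))" "(g has_real_derivative (-3 * f (t/2) ^ 5)) (at (t/2))"
    "g (t/2) ^ 2 + f (t/2) ^ 6 = 1" using assms unfolding solb_def by blast+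
  note d = dbl_pt[OF a]
  have tt: "2 * (t/2) = t" by simp
  show "(dF f has_real_derivative dG f g t) (at t) \<and>
         (dG f g has_real_derivative - 3 * dF f t ^ 5) (at t) \<and> (dG f g t)\<^sup>2 + dF f t ^ 6 = 1"
    using d unfolding tt dF_def dG_def by simp
qed

lemma solb_mono: "solb b f g \<Longrightarrow> b' \<le> b \<Longrightarrow> solb b' f g"
  unfolding solb_def by auto

primrec FG :: "nat \<Rightarrow> (real \<Rightarrow> real) \<times> (real \<Rightarrow> real)" where
  "FG 0 = (f0, g0)"
| "FG (Suc k) = (dF (fst (FG k)), dG (fst (FG k)) (snd (FG k)))"

lemma FG_sol: "solb (A0 * 2^k) (fst (FG k)) (snd (FG k)) \<and> fst (FG k) 0 = 1 \<and> snd (FG k) 0 = 0"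
proof (induction k)
  case 0 then show ?case using local_sol by simp
next
  case (Suc k)
  then show ?case using sol_dbl[of "A0 * 2^k" "fst (FG k)" "snd (FG k)"]
    by (simp add: dF_def dG_def Dd1 mult.commute mult.left_commute)
qed

lemma FG_step: assumes "\<bar>t\<bar> < A0 * 2^k"
  shows "fst (FG (Suc k)) t = fst (FG k) t \<and> snd (FG (Suc k)) t = snd (FG k) t"
proof (rule uniq[OF _ _ _ _ assms])
  show "solb (A0 * 2 ^ k) (fst (FG (Suc k))) (snd (FG (Suc k)))"
    using FG_sol[of "Suc k"] A0_pos by (auto intro: solb_mono)
  show "solb (A0 * 2 ^ k) (fst (FG k)) (snd (FG k))" using FG_sol by blast
  show "fst (FG (Suc k)) 0 = fst (FG k) 0" "snd (FG (Suc k)) 0 = snd (FG k) 0"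
    using FG_sol[of k] FG_sol[of "Suc k"] by simp_all
qed

lemma FG_cons: assumes "k \<le> m" "\<bar>t\<bar> < A0 * 2^k"
  shows "fst (FG m) t = fst (FG k) t \<and> snd (FG m) t = snd (FG k) t"
  using assms(1)
proof (induction m rule: dec_induct)
  case base then show ?case by simp
next
  case (step n)
  have "A0 * 2^k \<le> A0 * 2^n" using step(1) A0_pos by simp
  then have "\<bar>t\<bar> < A0 * 2^n" using assms(2) by linarith
  then show ?case using FG_step step(3) by simp
qed

lemma ex_k: "\<exists>k. \<bar>t\<bar> < A0 * 2^k"
proof -
  obtain k where "\<bar>t\<bar> / A0 < 2^k" using real_arch_pow[of 2 "\<bar>t\<bar> / A0"] by auto
  then show ?thesis using A0_pos by (auto simp: pos_divide_less_eq mult.commute)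
qed

definition "nn t = (LEAST k. \<bar>t\<bar> < A0 * 2^k)"
definition "rr t = fst (FG (nn t)) t"
definition "rr' t = snd (FG (nn t)) t"

lemma rr_eq: assumes "\<bar>t\<bar> < A0 * 2^k" shows "rr t = fst (FG k) t \<and> rr' t = snd (FG k) t"
proof -
  have le: "nn t \<le> k" unfolding nn_def using assms by (rule Least_le)
  have "\<bar>t\<bar> < A0 * 2^(nn t)" unfolding nn_def using ex_k by (rule LeastI_ex)
  then show ?thesis unfolding rr_def rr'_def using FG_cons[OF le] by simp
qed

lemma rr_glob: "(rr has_real_derivative rr' t) (at t) \<and> (rr' has_real_derivative (-3 * rr t ^ 5)) (at t)
   \<and> rr' t ^ 2 + rr t ^ 6 = 1"
proof -
  obtain k where k: "\<bar>t\<bar> < A0 * 2^k" using ex_k by blast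
  define S where "S = {-(A0 * 2^k)<..<A0 * 2^k}"
  have S: "open S" "t \<in> S" unfolding S_def using k by (auto simp: abs_less_iff)
  have eqS: "\<And>x. x \<in> S \<Longrightarrow> fst (FG k) x = rr x \<and> snd (FG k) x = rr' x"
  proof -
    fix x assume "x \<in> S"
    then have "\<bar>x\<bar> < A0 * 2^k" unfolding S_def by (simp add: abs_less_iff)
    then show "fst (FG k) x = rr x \<and> snd (FG k) x = rr' x" using rr_eq by simp
  qed
  have s: "(fst (FG k) has_real_derivative snd (FG k) t) (at t)"
     "(snd (FG k) has_real_derivative (-3 * fst (FG k) t ^ 5)) (at t)"
     "snd (FG k) t ^ 2 + fst (FG k) t ^ 6 = 1"
    using FG_sol[of k] k unfolding solb_def by blast+
  have "(rr has_real_derivative snd (FG k) t) (at t)"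
    by (rule has_field_derivative_transform_within_open[OF s(1) S]) (use eqS in blast)
  moreover have "(rr' has_real_derivative (-3 * fst (FG k) t ^ 5)) (at t)"
    by (rule has_field_derivative_transform_within_open[OF s(2) S]) (use eqS in blast)
  ultimately show ?thesis using s(3) eqS[OF S(2)] by simp
qed

lemma rr0: "rr 0 = 1" "rr' 0 = 0"
  using rr_eq[of 0 0] FG_sol[of 0] A0_pos by auto

lemma ivp_energy:
  assumes d: "\<And>l. (r has_real_derivative r' l) (at l)" "\<And>l. (r' has_real_derivative (-3 * r l ^ 5)) (at l)"
    and i: "r 0 = 1" "r' 0 = 0"
  shows "r' t ^ 2 + r t ^ 6 = 1"
proof -
  define E where "E x = r' x ^ 2 + r x ^ 6" for x
  have "\<forall>x. (E has_real_derivative 0) (at x)"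
  proof
    fix x
    show "(E has_real_derivative 0) (at x)"
      unfolding E_def[abs_def]
      apply (rule DERIV_cong)
      using d(1)[of x] d(2)[of x] apply (auto intro!: derivative_eq_intros)[1]
      by (simp add: algebra_simps)
  qed
  then have "E t = E 0" by (rule DERIV_isconst_all)
  then show ?thesis unfolding E_def using i by simp
qed

lemma leaf3_iff: "leaf_ivp 3 r \<longleftrightarrow> (\<exists>r'. (\<forall>l. (r has_real_derivative r' l) (at l)) \<and>
   (\<forall>l. (r' has_real_derivative (-3 * r l ^ 5)) (at l)) \<and> r 0 = 1 \<and> r' 0 = 0)"
  unfolding leaf_ivp_def by simp

lemma leaf3_solb: assumes "leaf_ivp 3 r" shows "\<exists>r'. (\<forall>b. solb b r r') \<and> r 0 = 1 \<and> r' 0 = 0"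
proof -
  obtain r' where d: "\<And>l. (r has_real_derivative r' l) (at l)" "\<And>l. (r' has_real_derivative (-3 * r l ^ 5)) (at l)"
    and i: "r 0 = 1" "r' 0 = 0" using assms unfolding leaf3_iff by blast
  have "\<forall>b. solb b r r'" unfolding solb_def using d ivp_energy[OF d i] by blast
  then show ?thesis using i by blast
qed

lemma leaf3_uniq: assumes "leaf_ivp 3 r1" "leaf_ivp 3 r2" shows "r1 = r2"
proof
  fix t
  obtain r1' where a: "\<forall>b. solb b r1 r1'" "r1 0 = 1" "r1' 0 = 0" using leaf3_solb[OF assms(1)] by blast
  obtain r2' where b: "\<forall>b. solb b r2 r2'" "r2 0 = 1" "r2' 0 = 0" using leaf3_solb[OF assms(2)] by blast
  have "r1 t = r2 t \<and> r1' t = r2' t"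
    by (rule uniq[of "\<bar>t\<bar> + 1"]) (use a b in auto)
  then show "r1 t = r2 t" by simp
qed

lemma rr_leaf: "leaf_ivp 3 rr"
  unfolding leaf3_iff using rr_glob rr0 by blast

lemma cleaf3: "cleaf 3 = rr"
  unfolding cleaf_def by (rule the_equality) (rule rr_leaf, rule leaf3_uniq[OF _ rr_leaf])

lemma rr_double: "rr (2 * l) = Dd (rr l)"
proof -
  have "\<forall>b. solb b rr rr'" unfolding solb_def using rr_glob by blast
  then have H: "solb (2*(\<bar>t\<bar>+1)) (dF rr) (dG rr rr')" for t using sol_dbl by blast
  have "(dF rr has_real_derivative dG rr rr' t) (at t) \<and> (dG rr rr' has_real_derivative (-3 * dF rr t ^ 5)) (at t)" for t
    using H[of t] unfolding solb_def by auto
  moreover have "dF rr 0 = 1" "dG rr rr' 0 = 0" using rr0 by (simp_all add: dF_def dG_def Dd1)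
  ultimately have "leaf_ivp 3 (dF rr)" unfolding leaf3_iff by blast
  then have "dF rr = rr" using leaf3_uniq rr_leaf by blast
  then show ?thesis unfolding dF_def by (metis nonzero_mult_div_cancel_left zero_neq_numeral)
qed


theorem mainTheorem7:
  fixes l :: real
  shows "cleaf 3 (2 * l) =
    (2 * (cleaf 3 l)^2 + 2 * (cleaf 3 l)^4 - 1) /
    sqrt (1 + 8 * (cleaf 3 l)^2 + 8 * (cleaf 3 l)^6 - 8 * (cleaf 3 l)^8)"
  unfolding cleaf3 using rr_double[of l] by (simp add: Dd_def Nn_def Pp_def)

end
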